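(* Let $n\ge 3$ and let the sites $\{1,\dots,n\}$ of a qubit chain be partitioned into three nonempty consecutive intervals $L=\{1,\dots,a\}$, $C=\{a+1,\dots,a+k\}$, $R=\{a+k+1,\dots,n\}$. Let $W\in \mathrm{Sp}(2n,\mathbb{Z}_2)$ and write $\mathbb{Z}_2^{2n}=V_L\oplus V_C\oplus V_R$, vectors as $(l,c,r)$. Then the following are equivalent: (i) (wall to initial conditions) there exists a linear subspace $G\subseteq V_C$ such that for all integers $t\ge 0$ and all $u\in V_L$, $W^t(u,0,0)\in V_L\oplus G\oplus\{0\}$; (ii) (wall to input signals) there exists a linear subspace $G'\subseteq V_C$ such that for every finitely supported function $u:\mathbb{Z}_{\ge 0}\to V_L$, $\sum_{t\ge 0} W^t(u(t),0,0)\in V_L\oplus G'\oplus\{0\}$.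
   Context: Pauli operators on $n$ qubits modulo phases are identified with $\mathbb{Z}_2^{2n}$ via $(p_1,q_1,\dots,p_n,q_n)\mapsto X^{p_1}Z^{q_1}\otimes\cdots\otimes X^{p_n}Z^{q_n}$. The binary symplectic form is $J=\bigoplus_{i=1}^n \begin{pmatrix}0&1\\1&0\end{pmatrix}$, and $\mathrm{Sp}(2n,\mathbb{Z}_2)=\{S: SJS^T=J\}$; every Clifford unitary $U$ induces such a matrix $W$ with $UP_bU^\dagger\propto P_{Wb}$. For a set of sites $S$, $V_S\subseteq\mathbb{Z}_2^{2n}$ denotes the subspace of vectors whose coordinates $(p_i,q_i)$ vanish for all $i\notin S$. *)

theory Defs
  imports "Jordan_Normal_Form.Matrix" "HOL-Library.Z2"
begin

text \<open>Pauli vectors on n qubits: bit vectors of dimension 2n; coordinates 2(i-1), 2(i-1)+1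
  (0-based) are (p_i, q_i) of site i in {1..n}.\<close>

definition sympJ :: "nat \<Rightarrow> bit mat" where
  "sympJ n = mat (2*n) (2*n) (\<lambda>(i,j). if i div 2 = j div 2 \<and> i \<noteq> j then 1 else 0)"

definition Sp2 :: "nat \<Rightarrow> bit mat set" where
  "Sp2 n = {S. S \<in> carrier_mat (2*n) (2*n) \<and> S * sympJ n * transpose_mat S = sympJ n}"

definition Vsites :: "nat \<Rightarrow> nat set \<Rightarrow> bit vec set" where
  "Vsites n S = {v \<in> carrier_vec (2*n). \<forall>j<2*n. Suc (j div 2) \<notin> S \<longrightarrow> v $ j = 0}"

definition lin_subspace :: "nat \<Rightarrow> bit vec set \<Rightarrow> bool" where
  "lin_subspace n G \<longleftrightarrow> G \<subseteq> carrier_vec n \<and> 0\<^sub>v n \<in> G \<and>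
     (\<forall>x\<in>G. \<forall>y\<in>G. x + y \<in> G) \<and> (\<forall>c x. x \<in> G \<longrightarrow> c \<cdot>\<^sub>v x \<in> G)"

definition dsum_LG :: "bit vec set \<Rightarrow> bit vec set \<Rightarrow> bit vec set" where
  "dsum_LG VL G = {l + g | l g. l \<in> VL \<and> g \<in> G}"

end

theory Submission
  imports Defs
begin

lemma Vsites_sub: "lin_subspace (2*n) (Vsites n S)"
  unfolding lin_subspace_def Vsites_def by auto

lemma dsum_zero:
  fixes V G :: "bit vec set"
  assumes "lin_subspace m V" "lin_subspace m G"
  shows "0\<^sub>v m \<in> dsum_LG V G"
proof -
  have "(0\<^sub>v m :: bit vec) = 0\<^sub>v m + 0\<^sub>v m" by (intro eq_vecI) auto
  thus ?thesis using assms unfolding dsum_LG_def lin_subspace_def by blast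
qed

lemma dsum_carrier:
  fixes V G :: "bit vec set"
  assumes "lin_subspace m V" "lin_subspace m G" "x \<in> dsum_LG V G"
  shows "x \<in> carrier_vec m"
  using assms unfolding dsum_LG_def lin_subspace_def by (auto intro!: add_carrier_vec)

lemma dsum_add:
  fixes V G :: "bit vec set"
  assumes V: "lin_subspace m V" and G: "lin_subspace m G"
    and x: "x \<in> dsum_LG V G" and y: "y \<in> dsum_LG V G"
  shows "x + y \<in> dsum_LG V G"
proof -
  obtain l1 g1 where 1: "x = l1 + g1" "l1 \<in> V" "g1 \<in> G" using x unfolding dsum_LG_def by auto
  obtain l2 g2 where 2: "y = l2 + g2" "l2 \<in> V" "g2 \<in> G" using y unfolding dsum_LG_def by auto
  have c: "l1 \<in> carrier_vec m" "l2 \<in> carrier_vec m" "g1 \<in> carrier_vec m" "g2 \<in> carrier_vec m"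
    using 1 2 V G unfolding lin_subspace_def by auto
  have "x + y = (l1 + l2) + (g1 + g2)" using 1 2 c
    by (intro eq_vecI) (auto simp: ac_simps)
  moreover have "l1 + l2 \<in> V" "g1 + g2 \<in> G" using 1 2 V G unfolding lin_subspace_def by auto
  ultimately show ?thesis unfolding dsum_LG_def by blast
qed

lemma dsum_finsum:
  fixes V G :: "bit vec set"
  assumes V: "lin_subspace m V" and G: "lin_subspace m G" and fin: "finite F"
    and f: "\<And>t. t \<in> F \<Longrightarrow> f t \<in> dsum_LG V G"
  shows "finsum_vec TYPE(bit) m f F \<in> dsum_LG V G"
  using fin f
proof (induction F rule: finite_induct)
  case empty
  then show ?case using dsum_zero[OF V G] by (simp add: finsum_vec_empty)
next
  case (insert x F)
  have fc: "f \<in> insert x F \<rightarrow> carrier_vec m" using insert.prems dsum_carrier[OF V G] by auto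
  hence fc2: "f \<in> F \<rightarrow> carrier_vec m" by auto
  have "finsum_vec TYPE(bit) m f (insert x F) = f x + finsum_vec TYPE(bit) m f F"
    using finsum_vec_insert[OF insert.hyps(1,2) fc2] fc by auto
  then show ?case using dsum_add[OF V G] insert by auto
qed

theorem lemma2:
  fixes n a k :: nat and W :: "bit mat"
  assumes "n \<ge> 3" and "1 \<le> a" and "1 \<le> k" and "a + k < n"
    and "W \<in> Sp2 n"
  shows "(\<exists>G. lin_subspace (2*n) G \<and> G \<subseteq> Vsites n {a+1..a+k} \<and>
            (\<forall>(t::nat) u. u \<in> Vsites n {1..a} \<longrightarrow>
               (W ^\<^sub>m t) *\<^sub>v u \<in> dsum_LG (Vsites n {1..a}) G))
     \<longleftrightarrow>
         (\<exists>G'. lin_subspace (2*n) G' \<and> G' \<subseteq> Vsites n {a+1..a+k} \<and>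
            (\<forall>u :: nat \<Rightarrow> bit vec. (\<forall>t. u t \<in> Vsites n {1..a}) \<longrightarrow>
               finite {t. u t \<noteq> 0\<^sub>v (2*n)} \<longrightarrow>
               finsum_vec TYPE(bit) (2*n) (\<lambda>t. (W ^\<^sub>m t) *\<^sub>v u t) {t. u t \<noteq> 0\<^sub>v (2*n)}
                 \<in> dsum_LG (Vsites n {1..a}) G'))"
proof
  assume "\<exists>G. lin_subspace (2*n) G \<and> G \<subseteq> Vsites n {a+1..a+k} \<and>
            (\<forall>(t::nat) u. u \<in> Vsites n {1..a} \<longrightarrow>
               (W ^\<^sub>m t) *\<^sub>v u \<in> dsum_LG (Vsites n {1..a}) G)"
  then obtain G where G: "lin_subspace (2*n) G" "G \<subseteq> Vsites n {a+1..a+k}"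
    "\<And>t u. u \<in> Vsites n {1..a} \<Longrightarrow> (W ^\<^sub>m t) *\<^sub>v u \<in> dsum_LG (Vsites n {1..a}) G" by blast
  show "\<exists>G'. lin_subspace (2*n) G' \<and> G' \<subseteq> Vsites n {a+1..a+k} \<and>
            (\<forall>u :: nat \<Rightarrow> bit vec. (\<forall>t. u t \<in> Vsites n {1..a}) \<longrightarrow>
               finite {t. u t \<noteq> 0\<^sub>v (2*n)} \<longrightarrow>
               finsum_vec TYPE(bit) (2*n) (\<lambda>t. (W ^\<^sub>m t) *\<^sub>v u t) {t. u t \<noteq> 0\<^sub>v (2*n)}
                 \<in> dsum_LG (Vsites n {1..a}) G')"
  proof (intro exI conjI allI impI)
    fix u :: "nat \<Rightarrow> bit vec"
    assume u: "\<forall>t. u t \<in> Vsites n {1..a}" and fin: "finite {t. u t \<noteq> 0\<^sub>v (2*n)}"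
    show "finsum_vec TYPE(bit) (2*n) (\<lambda>t. (W ^\<^sub>m t) *\<^sub>v u t) {t. u t \<noteq> 0\<^sub>v (2*n)}
                 \<in> dsum_LG (Vsites n {1..a}) G"
      by (rule dsum_finsum[OF Vsites_sub G(1) fin]) (use u G(3) in blast)
  qed (use G in auto)
next
  assume "\<exists>G'. lin_subspace (2*n) G' \<and> G' \<subseteq> Vsites n {a+1..a+k} \<and>
            (\<forall>u :: nat \<Rightarrow> bit vec. (\<forall>t. u t \<in> Vsites n {1..a}) \<longrightarrow>
               finite {t. u t \<noteq> 0\<^sub>v (2*n)} \<longrightarrow>
               finsum_vec TYPE(bit) (2*n) (\<lambda>t. (W ^\<^sub>m t) *\<^sub>v u t) {t. u t \<noteq> 0\<^sub>v (2*n)}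
                 \<in> dsum_LG (Vsites n {1..a}) G')"
  then obtain G where G: "lin_subspace (2*n) G" "G \<subseteq> Vsites n {a+1..a+k}"
    and H: "\<And>u :: nat \<Rightarrow> bit vec. (\<forall>t. u t \<in> Vsites n {1..a}) \<Longrightarrow>
               finite {t. u t \<noteq> 0\<^sub>v (2*n)} \<Longrightarrow>
               finsum_vec TYPE(bit) (2*n) (\<lambda>t. (W ^\<^sub>m t) *\<^sub>v u t) {t. u t \<noteq> 0\<^sub>v (2*n)}
                 \<in> dsum_LG (Vsites n {1..a}) G" by blast
  have Wc: "W \<in> carrier_mat (2*n) (2*n)" using assms(5) unfolding Sp2_def by auto
  have "(W ^\<^sub>m t) *\<^sub>v u \<in> dsum_LG (Vsites n {1..a}) G" if u: "u \<in> Vsites n {1..a}" for t u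
  proof (cases "u = 0\<^sub>v (2*n)")
    case True
    have pc: "W ^\<^sub>m t \<in> carrier_mat (2*n) (2*n)" using Wc by simp
    have "(W ^\<^sub>m t) *\<^sub>v u = 0\<^sub>v (2*n)" using True pc
      by (intro eq_vecI) (auto simp: scalar_prod_def)
    then show ?thesis using dsum_zero[OF Vsites_sub G(1)] by simp
  next
    case False
    define f where "f = (\<lambda>s. if s = t then u else 0\<^sub>v (2*n))"
    have S: "{s. f s \<noteq> 0\<^sub>v (2*n)} = {t}" using False unfolding f_def by auto
    have fV: "\<forall>s. f s \<in> Vsites n {1..a}" using u unfolding f_def Vsites_def by auto
    have uc: "u \<in> carrier_vec (2*n)" using u unfolding Vsites_def by auto
    have pc: "W ^\<^sub>m t \<in> carrier_mat (2*n) (2*n)" using Wc by simp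
    have "finsum_vec TYPE(bit) (2*n) (\<lambda>s. (W ^\<^sub>m s) *\<^sub>v f s) {t} = (W ^\<^sub>m t) *\<^sub>v u"
      using finsum_vec_insert[of "{}" t "\<lambda>s. (W ^\<^sub>m s) *\<^sub>v f s" "2*n"] pc uc
      by (auto simp: finsum_vec_empty f_def)
    then show ?thesis using H[OF fV] unfolding S by simp
  qed
  then show "\<exists>G. lin_subspace (2*n) G \<and> G \<subseteq> Vsites n {a+1..a+k} \<and>
            (\<forall>(t::nat) u. u \<in> Vsites n {1..a} \<longrightarrow>
               (W ^\<^sub>m t) *\<^sub>v u \<in> dsum_LG (Vsites n {1..a}) G)" using G by blast
qed

end
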